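(* In the pBeeGees protocol (setting described in the context), for every view $v$, at most one block of view $v$ can collect a quorum certificate (of any of the four vote types).
   Context: Setting (pBeeGees). There are $n=3f+1$ processes, at most $f$ of which are Byzantine (they may deviate arbitrarily but cannot forge signatures or message digests); the others are correct. The protocol proceeds in views $v=1,2,\dots$, each with a designated leader $l_v$. Blocks carry a view number $B.v$, a parent block, and a quorum certificate. A vote for a block $B$ is cast in view $B.v$ and has one of four types: normal, prud, eqvc, or (prud,eqvc). A quorum certificate (QC) for a block $B$ consists of $n-f$ votes of the same type for $B$ from distinct processes; a block "collects" a QC if such a QC for it exists. A correct process votes at most once per view. *)

theory Defs
  imports Main
begin

datatype vote_type = Normal | Prud | Eqvc | PrudEqvc

text \<open>Processes form a finite type 'p (n = card UNIV).  The predicate voted p B t means that process p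
  cast a vote of type t for block B (such a vote is cast in view B.v).\<close>
definition collects_QC ::
  "nat \<Rightarrow> ('p::finite \<Rightarrow> 'b \<Rightarrow> vote_type \<Rightarrow> bool) \<Rightarrow> 'b \<Rightarrow> bool" where
  "collects_QC f voted B \<longleftrightarrow>
     (\<exists>t Q. card Q = card (UNIV :: 'p set) - f \<and> (\<forall>p\<in>Q. voted p B t))"

definition votes_once_per_view ::
  "('b \<Rightarrow> nat) \<Rightarrow> ('p \<Rightarrow> 'b \<Rightarrow> vote_type \<Rightarrow> bool) \<Rightarrow> 'p \<Rightarrow> bool" where
  "votes_once_per_view view voted p \<longleftrightarrow>
     (\<forall>B B' t t'. voted p B t \<and> voted p B' t' \<and> view B = view B' \<longrightarrow> B = B' \<and> t = t')"

end

theory Submission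
  imports Defs
begin

theorem lemma1:
  fixes f :: nat
    and view :: "'b \<Rightarrow> nat"
    and voted :: "'p::finite \<Rightarrow> 'b \<Rightarrow> vote_type \<Rightarrow> bool"
    and Byz :: "'p set"
    and B1 B2 :: 'b
    and v :: nat
  assumes "card (UNIV :: 'p set) = 3 * f + 1"
    and "card Byz \<le> f"
    and "\<forall>p. p \<notin> Byz \<longrightarrow> votes_once_per_view view voted p"
    and "view B1 = v" and "view B2 = v"
    and "collects_QC f voted B1" and "collects_QC f voted B2"
  shows "B1 = B2"
proof -
  obtain t1 Q1 where q1: "card Q1 = card (UNIV :: 'p set) - f" "\<forall>p\<in>Q1. voted p B1 t1"
    using assms(6) unfolding collects_QC_def by blast
  obtain t2 Q2 where q2: "card Q2 = card (UNIV :: 'p set) - f" "\<forall>p\<in>Q2. voted p B2 t2"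
    using assms(7) unfolding collects_QC_def by blast
  have u: "card (Q1 \<union> Q2) \<le> 3 * f + 1"
    using assms(1) card_mono[of UNIV "Q1 \<union> Q2"] by simp
  have "card (Q1 \<union> Q2) + card (Q1 \<inter> Q2) = card Q1 + card Q2"
    using card_Un_Int[of Q1 Q2] by simp
  hence i: "card (Q1 \<inter> Q2) > card Byz" using u q1(1) q2(1) assms(1,2) by simp
  have "\<not> (Q1 \<inter> Q2 \<subseteq> Byz)"
  proof
    assume "Q1 \<inter> Q2 \<subseteq> Byz"
    hence "card (Q1 \<inter> Q2) \<le> card Byz" by (rule card_mono[rotated]) simp
    thus False using i by simp
  qed
  then obtain p where p: "p \<in> Q1" "p \<in> Q2" "p \<notin> Byz" by blast
  hence "votes_once_per_view view voted p" using assms(3) by blast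
  thus ?thesis using p q1(2) q2(2) assms(4,5) unfolding votes_once_per_view_def by metis
qed

end
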